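(* Let $\Omega$ be a metrizable separable space, $\mathcal{P}$ a weakly relatively compact set of Borel probability measures on $\Omega$, $1\le p<\infty$, and $c_p=c_{p,\mathcal{P}}$. Then: (i) for every non-negative bounded lower semicontinuous function $g$ on $\Omega$, $c_p(g)=\sup_{Q\in\mathcal{P}}E_Q(g^p)^{1/p}$; (ii) for every Borel function $f$ on $\Omega$, $\sup_{Q\in\mathcal{P}}E_Q(|f|^p)^{1/p}\le c_p(f)$.
   Context: $c_{p,\mathcal{P}}(f)=\sup_{P\in\mathcal{P}}E_P(|f|^p)^{1/p}$ for $f\in\mathcal{C}_b(\Omega)$, extended to all real functions by $c(f)=\sup\{c(\varphi):\varphi\in\mathcal{C}_b(\Omega),0\le\varphi\le f\}$ for $f\ge0$ lower semicontinuous and $c(g)=\inf\{c(f):f\text{ l.s.c.},f\ge|g|\}$ for arbitrary $g$. Weak relative compactness refers to the topology on probability measures making $\mu\mapsto\int f\,d\mu$ continuous for all $f\in\mathcal{C}_b(\Omega)$. *)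

theory Defs
  imports "HOL-Probability.Probability"
begin

definition Cb :: "('a::topological_space \<Rightarrow> real) set" where
  "Cb = {f. continuous_on UNIV f \<and> bounded (range f)}"

definition lsc :: "('a::topological_space \<Rightarrow> real) \<Rightarrow> bool" where
  "lsc f \<longleftrightarrow> (\<forall>a. open {x. a < f x})"

definition borel_probs :: "'a::topological_space measure set" where
  "borel_probs = {M. prob_space M \<and> sets M = sets borel}"

definition weak_topology :: "'a::topological_space measure topology" where
  "weak_topology = topology_generated_by
     {{M \<in> borel_probs. (\<integral>x. f x \<partial>M) \<in> U} | f U. f \<in> Cb \<and> open U}"

definition weakly_rel_compact :: "'a::topological_space measure set \<Rightarrow> bool" where
  "weakly_rel_compact \<P> \<longleftrightarrow> \<P> \<subseteq> borel_probs \<and>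
     compactin weak_topology (weak_topology closure_of \<P>)"

definition enn_root :: "real \<Rightarrow> ennreal \<Rightarrow> ennreal" where
  "enn_root p x = (if x = \<infinity> then \<infinity> else ennreal (enn2real x powr (1 / p)))"

definition Lp_val :: "real \<Rightarrow> 'a measure \<Rightarrow> ('a \<Rightarrow> real) \<Rightarrow> ennreal" where
  "Lp_val p Q f = enn_root p (\<integral>\<^sup>+x. ennreal (\<bar>f x\<bar> powr p) \<partial>Q)"

definition cp_Cb :: "real \<Rightarrow> 'a measure set \<Rightarrow> ('a \<Rightarrow> real) \<Rightarrow> ennreal" where
  "cp_Cb p \<P> f = (SUP Q\<in>\<P>. Lp_val p Q f)"

definition cp_lsc :: "real \<Rightarrow> 'a::topological_space measure set \<Rightarrow> ('a \<Rightarrow> real) \<Rightarrow> ennreal" where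
  "cp_lsc p \<P> f = (SUP \<phi>\<in>{\<phi>\<in>Cb. \<forall>x. 0 \<le> \<phi> x \<and> \<phi> x \<le> f x}. cp_Cb p \<P> \<phi>)"

definition cp :: "real \<Rightarrow> 'a::topological_space measure set \<Rightarrow> ('a \<Rightarrow> real) \<Rightarrow> ennreal" where
  "cp p \<P> g =
     (if g \<in> Cb then cp_Cb p \<P> g
      else if lsc g \<and> (\<forall>x. 0 \<le> g x) then cp_lsc p \<P> g
      else (INF f\<in>{f. lsc f \<and> (\<forall>x. 0 \<le> f x) \<and> (\<forall>x. \<bar>g x\<bar> \<le> f x)}. cp_lsc p \<P> f))"

end

theory Submission
  imports Defs
begin

lemma enn_root_mono:
  assumes "p > 0" "x \<le> y" shows "enn_root p x \<le> enn_root p y"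
proof (cases "y = \<infinity>")
  case True then show ?thesis by (simp add: enn_root_def)
next
  case False
  then have "x \<noteq> \<infinity>" using assms(2) by (auto simp: top_unique)
  moreover have "enn2real x \<le> enn2real y" using assms(2) False by (simp add: enn2real_mono top.not_eq_extremum)
  ultimately show ?thesis using False
    using assms(1) by (auto simp: enn_root_def intro!: ennreal_leI powr_mono2)
qed

lemma enn_root_Sup:
  assumes "p > 0" shows "enn_root p (Sup A) \<le> Sup (enn_root p ` A)"
proof (cases "Sup (enn_root p ` A) = \<infinity>")
  case True then show ?thesis unfolding True by simp
next
  case False
  define c where "c = Sup (enn_root p ` A)"
  define r where "r = enn2real c"
  have r0: "r \<ge> 0" by (simp add: r_def)
  have cne: "c \<noteq> \<infinity>" unfolding c_def using False .
  have cr: "c = ennreal r" unfolding r_def using cne by (simp add: ennreal_enn2real_if)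
  have a_le: "a \<le> ennreal (r powr p)" if "a \<in> A" for a
  proof -
    have le: "enn_root p a \<le> c" using that by (auto simp: c_def intro: Sup_upper)
    then have "a \<noteq> \<infinity>" using cne by (cases "a = \<infinity>") (simp_all add: enn_root_def top_unique)
    then have "ennreal (enn2real a powr (1/p)) \<le> ennreal r" using le cr by (simp add: enn_root_def)
    then have "enn2real a powr (1/p) \<le> r" using r0 by simp
    then have "(enn2real a powr (1/p)) powr p \<le> r powr p" by (intro powr_mono2) (use assms in auto)
    then have "enn2real a \<le> r powr p" using assms by (simp add: powr_powr)
    then have "ennreal (enn2real a) \<le> ennreal (r powr p)" by (rule ennreal_leI)
    moreover have "ennreal (enn2real a) = a" using \<open>a \<noteq> \<infinity>\<close> by (simp add: less_top)
    ultimately show ?thesis by simp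
  qed
  then have S: "Sup A \<le> ennreal (r powr p)" by (rule Sup_least)
  then have "Sup A < top" using ennreal_less_top by (rule le_less_trans)
  then have fin: "Sup A \<noteq> \<infinity>" unfolding infinity_ennreal_def by (rule less_imp_neq)
  have "enn2real (Sup A) \<le> r powr p" using S by (simp add: enn2real_leI)
  then have "enn2real (Sup A) powr (1/p) \<le> (r powr p) powr (1/p)"
    by (intro powr_mono2) (use assms in auto)
  also have "\<dots> = r" using assms r0 by (simp add: powr_powr)
  finally have "ennreal (enn2real (Sup A) powr (1/p)) \<le> c" unfolding cr by (rule ennreal_leI)
  then show ?thesis using fin unfolding c_def enn_root_def by (simp only: if_False)
qed

lemma lsc_approx:
  fixes h :: "'a::metric_space \<Rightarrow> real"
  assumes lsc: "lsc h" and h0: "\<forall>x. 0 \<le> h x"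
  obtains \<phi> :: "nat \<Rightarrow> 'a \<Rightarrow> real" where "\<And>n. \<phi> n \<in> Cb"
    "\<And>n x. 0 \<le> \<phi> n x" "\<And>n x. \<phi> n x \<le> h x"
    "\<And>x. incseq (\<lambda>n. \<phi> n x)" "\<And>x. (\<lambda>n. \<phi> n x) \<longlonglongrightarrow> h x"
proof -
  define F where "F n x = Inf (range (\<lambda>y. h y + real n * dist x y))" for n x
  have bdd: "bdd_below (range (\<lambda>y. h y + real n * dist x y))" for n x
    by (rule bdd_belowI[where m=0]) (use h0 in auto)
  have Fl: "F n x \<le> h y + real n * dist x y" for n x y
    unfolding F_def by (rule cInf_lower[OF _ bdd]) auto
  have Fg: "c \<le> F n x" if "\<And>y. c \<le> h y + real n * dist x y" for c n x
    unfolding F_def by (rule cInf_greatest) (use that in auto)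
  have F0: "0 \<le> F n x" for n x by (rule Fg) (use h0 in auto)
  have Fh: "F n x \<le> h x" for n x using Fl[of n x x] by simp
  have Flip: "F n x \<le> F n x' + real n * dist x x'" for n x x'
  proof -
    have "F n x - real n * dist x x' \<le> F n x'"
    proof (rule Fg)
      fix y
      have "F n x \<le> h y + real n * dist x y" by (rule Fl)
      also have "\<dots> \<le> h y + real n * (dist x x' + dist x' y)"
        by (intro add_left_mono mult_left_mono dist_triangle) auto
      finally show "F n x - real n * dist x x' \<le> h y + real n * dist x' y"
        by (simp add: algebra_simps)
    qed
    then show ?thesis by simp
  qed
  have Fabs: "\<bar>F n x - F n x'\<bar> \<le> real n * dist x x'" for n x x'
    using Flip[of n x x'] Flip[of n x' x] by (simp add: dist_commute abs_le_iff)
  have Fcont: "continuous_on UNIV (F n)" for n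
    unfolding continuous_on_iff
  proof (intro ballI allI impI)
    fix x e assume "e > (0::real)"
    show "\<exists>d>0. \<forall>x'\<in>UNIV. dist x' x < d \<longrightarrow> dist (F n x') (F n x) < e"
    proof (intro exI[of _ "e / (real n + 1)"] conjI ballI impI)
      show "0 < e / (real n + 1)" using \<open>e > 0\<close> by simp
      fix x' assume d: "dist x' x < e / (real n + 1)"
      have "dist (F n x') (F n x) \<le> real n * dist x' x" using Fabs[of n x' x] by (simp add: dist_real_def)
      also have "\<dots> \<le> (real n + 1) * dist x' x" by (simp add: algebra_simps)
      also have "\<dots> < (real n + 1) * (e / (real n + 1))"
        by (rule mult_strict_left_mono[OF d]) simp
      also have "\<dots> = e" by simp
      finally show "dist (F n x') (F n x) < e" .
    qed
  qed
  have Fmono: "F m x \<le> F n x" if "m \<le> n" for m n x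
  proof (rule Fg)
    fix y
    have "F m x \<le> h y + real m * dist x y" by (rule Fl)
    also have "\<dots> \<le> h y + real n * dist x y" using that by (intro add_left_mono mult_right_mono) auto
    finally show "F m x \<le> h y + real n * dist x y" .
  qed
  define \<phi> where "\<phi> n x = min (real n) (F n x)" for n x
  show ?thesis
  proof
    fix n
    show "\<phi> n \<in> Cb"
      unfolding Cb_def
    proof (intro CollectI conjI)
      show "continuous_on UNIV (\<phi> n)" unfolding \<phi>_def
        by (intro continuous_on_min continuous_on_const Fcont)
      show "bounded (range (\<phi> n))" unfolding bounded_real
        by (rule exI[of _ "real n"]) (auto simp: \<phi>_def F0)
    qed
  next
    fix n x show "0 \<le> \<phi> n x" by (simp add: \<phi>_def F0)
  next
    fix n x show "\<phi> n x \<le> h x" using Fh[of n x] by (simp add: \<phi>_def)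
  next
    fix x show "incseq (\<lambda>n. \<phi> n x)"
      unfolding incseq_def \<phi>_def
    proof (intro allI impI)
      fix m n :: nat assume "m \<le> n"
      then show "min (real m) (F m x) \<le> min (real n) (F n x)"
        by (intro min.mono Fmono) simp_all
    qed
  next
    fix x show "(\<lambda>n. \<phi> n x) \<longlonglongrightarrow> h x"
    proof (rule LIMSEQ_I)
      fix e :: real assume e: "e > 0"
      have "open {y. h x - e/2 < h y}" using lsc by (simp add: lsc_def)
      moreover have "x \<in> {y. h x - e/2 < h y}" using e by simp
      ultimately obtain d where d: "d > 0" "ball x d \<subseteq> {y. h x - e/2 < h y}"
        by (meson open_contains_ball)
      obtain N :: nat where N: "h x / d \<le> real N" using real_arch_simple by blast
      have "norm (\<phi> n x - h x) < e" if "n \<ge> max N (nat \<lceil>h x\<rceil>)" for n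
      proof -
        have nN: "real N \<le> real n" using that by simp
        have "h x \<le> real n" using that by linarith
        have "h x - e/2 < h y + real n * dist x y" for y
        proof (cases "dist x y < d")
          case True
          then have "h x - e/2 < h y" using d(2) by (auto simp: subset_eq)
          moreover have "0 \<le> real n * dist x y" by simp
          ultimately show ?thesis by linarith
        next
          case False
          have "h x \<le> real N * d" using N d(1) by (simp add: field_simps)
          also have "\<dots> \<le> real n * dist x y" using False nN d(1)
            by (intro mult_mono) auto
          finally show ?thesis using h0[rule_format, of y] e by simp
        qed
        then have "h x - e/2 \<le> F n x" by (intro Fg less_imp_le)
        then have "h x - e/2 \<le> \<phi> n x" using \<open>h x \<le> real n\<close> e by (simp add: \<phi>_def)
        moreover have "\<phi> n x \<le> h x" using Fh[of n x] by (simp add: \<phi>_def)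
        ultimately show ?thesis using e by (simp add: abs_le_iff)
      qed
      then show "\<exists>no. \<forall>n\<ge>no. norm (\<phi> n x - h x) < e" by blast
    qed
  qed
qed

lemma Lp_val_mono:
  assumes "p > 0" "\<And>x. \<bar>f x\<bar> \<le> \<bar>g x\<bar>"
  shows "Lp_val p Q f \<le> Lp_val p Q g"
  unfolding Lp_val_def
  by (intro enn_root_mono nn_integral_mono ennreal_leI powr_mono2 assms) (use assms in auto)

lemma Lp_lsc_le:
  fixes h :: "'a::metric_space \<Rightarrow> real"
  assumes lsc: "lsc h" and h0: "\<forall>x. 0 \<le> h x" and sQ: "sets Q = sets borel" and p: "p > 0"
  shows "Lp_val p Q h \<le> (SUP \<phi>\<in>{\<phi>\<in>Cb. \<forall>x. 0 \<le> \<phi> x \<and> \<phi> x \<le> h x}. Lp_val p Q \<phi>)"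
proof -
  obtain \<phi> :: "nat \<Rightarrow> 'a \<Rightarrow> real" where C: "\<And>n. \<phi> n \<in> Cb"
    and nn: "\<And>n x. 0 \<le> \<phi> n x" and le: "\<And>n x. \<phi> n x \<le> h x"
    and inc: "\<And>x. incseq (\<lambda>n. \<phi> n x)" and lim: "\<And>x. (\<lambda>n. \<phi> n x) \<longlonglongrightarrow> h x"
    using lsc_approx[OF lsc h0] by blast
  define f where "f n x = ennreal (\<bar>\<phi> n x\<bar> powr p)" for n x
  have finc: "incseq f"
  proof (rule incseq_SucI, rule le_funI)
    fix n x
    show "f n x \<le> f (Suc n) x" unfolding f_def
      using inc[of x] nn[of n x] nn[of "Suc n" x] p by (auto intro!: ennreal_leI powr_mono2 simp: incseq_Suc_iff)
  qed
  have fmeas: "f n \<in> borel_measurable Q" for n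
  proof -
    have "\<phi> n \<in> borel_measurable borel"
      using C[of n] by (intro borel_measurable_continuous_onI) (simp add: Cb_def)
    then have "f n \<in> borel_measurable borel" unfolding f_def by measurable
    moreover have "borel_measurable Q = (borel_measurable (borel::'a measure) :: ('a \<Rightarrow> ennreal) set)"
      by (rule measurable_cong_sets[OF sQ refl])
    ultimately show ?thesis by simp
  qed
  have fsup: "(SUP n. f n x) = ennreal (\<bar>h x\<bar> powr p)" for x
  proof (rule LIMSEQ_unique)
    show "(\<lambda>n. f n x) \<longlonglongrightarrow> (SUP n. f n x)"
      by (rule LIMSEQ_SUP) (use finc in \<open>auto simp: incseq_def le_fun_def\<close>)
    have "(\<lambda>n. \<bar>\<phi> n x\<bar>) \<longlonglongrightarrow> \<bar>h x\<bar>" by (intro tendsto_intros lim)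
    then have "(\<lambda>n. \<bar>\<phi> n x\<bar> powr p) \<longlonglongrightarrow> \<bar>h x\<bar> powr p"
      using p by (intro tendsto_powr') auto
    then show "(\<lambda>n. f n x) \<longlonglongrightarrow> ennreal (\<bar>h x\<bar> powr p)"
      unfolding f_def by (rule tendsto_ennrealI)
  qed
  have "Lp_val p Q h = enn_root p (\<integral>\<^sup>+x. (SUP n. f n x) \<partial>Q)"
    unfolding Lp_val_def fsup ..
  also have "\<dots> = enn_root p (SUP n. integral\<^sup>N Q (f n))"
    by (simp add: nn_integral_monotone_convergence_SUP[OF finc fmeas])
  also have "\<dots> \<le> Sup (enn_root p ` range (\<lambda>n. integral\<^sup>N Q (f n)))"
    by (rule enn_root_Sup[OF p])
  also have "\<dots> = (SUP n. Lp_val p Q (\<phi> n))"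
    unfolding Lp_val_def f_def image_image ..
  also have "\<dots> \<le> (SUP \<phi>\<in>{\<phi>\<in>Cb. \<forall>x. 0 \<le> \<phi> x \<and> \<phi> x \<le> h x}. Lp_val p Q \<phi>)"
    by (rule SUP_least, rule SUP_upper) (use C nn le in auto)
  finally show ?thesis .
qed

lemma cp_lsc_eq:
  fixes h :: "'a::metric_space \<Rightarrow> real"
  assumes P: "\<P> \<subseteq> borel_probs" and p: "p > 0" and lsc: "lsc h" and h0: "\<forall>x. 0 \<le> h x"
  shows "cp_lsc p \<P> h = (SUP Q\<in>\<P>. Lp_val p Q h)"
proof (rule antisym)
  show "cp_lsc p \<P> h \<le> (SUP Q\<in>\<P>. Lp_val p Q h)"
    unfolding cp_lsc_def cp_Cb_def
  proof (rule SUP_least)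
    fix \<phi> assume \<phi>: "\<phi> \<in> {\<phi>\<in>Cb. \<forall>x. 0 \<le> \<phi> x \<and> \<phi> x \<le> h x}"
    show "(SUP Q\<in>\<P>. Lp_val p Q \<phi>) \<le> (SUP Q\<in>\<P>. Lp_val p Q h)"
    proof (rule SUP_mono)
      fix Q assume "Q \<in> \<P>"
      have "Lp_val p Q \<phi> \<le> Lp_val p Q h"
        by (rule Lp_val_mono[OF p]) (use \<phi> h0 in \<open>auto simp: abs_le_iff\<close>)
      then show "\<exists>Q'\<in>\<P>. Lp_val p Q \<phi> \<le> Lp_val p Q' h" using \<open>Q \<in> \<P>\<close> by blast
    qed
  qed
  show "(SUP Q\<in>\<P>. Lp_val p Q h) \<le> cp_lsc p \<P> h"
  proof (rule SUP_least)
    fix Q assume "Q \<in> \<P>"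
    then have sQ: "sets Q = sets borel" using P by (auto simp: borel_probs_def)
    have "Lp_val p Q h \<le> (SUP \<phi>\<in>{\<phi>\<in>Cb. \<forall>x. 0 \<le> \<phi> x \<and> \<phi> x \<le> h x}. Lp_val p Q \<phi>)"
      by (rule Lp_lsc_le[OF lsc h0 sQ p])
    also have "\<dots> \<le> cp_lsc p \<P> h"
      unfolding cp_lsc_def cp_Cb_def
      by (intro SUP_mono') (rule SUP_upper, fact)
    finally show "Lp_val p Q h \<le> cp_lsc p \<P> h" .
  qed
qed

theorem proposition4p4:
  fixes \<P> :: "'a::{metric_space, second_countable_topology} measure set"
    and p :: real
  assumes "weakly_rel_compact \<P>"
    and "1 \<le> p"
  shows "(\<forall>g::'a \<Rightarrow> real. (\<forall>x. 0 \<le> g x) \<and> bounded (range g) \<and> lsc g \<longrightarrow>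
            cp p \<P> g = (SUP Q\<in>\<P>. Lp_val p Q g))
       \<and> (\<forall>f::'a \<Rightarrow> real. f \<in> borel_measurable borel \<longrightarrow>
            (SUP Q\<in>\<P>. Lp_val p Q f) \<le> cp p \<P> f)"
proof -
  have P: "\<P> \<subseteq> borel_probs" using assms(1) by (simp add: weakly_rel_compact_def)
  have p: "p > 0" using assms(2) by simp
  have A: "cp p \<P> g = (SUP Q\<in>\<P>. Lp_val p Q g)" if "\<forall>x. 0 \<le> g x" "lsc g" for g :: "'a \<Rightarrow> real"
    using cp_lsc_eq[OF P p that(2) that(1)] that by (simp add: cp_def cp_Cb_def)
  have B: "(SUP Q\<in>\<P>. Lp_val p Q f) \<le> cp p \<P> f" for f :: "'a \<Rightarrow> real"
  proof (cases "f \<in> Cb \<or> (lsc f \<and> (\<forall>x. 0 \<le> f x))")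
    case True
    then show ?thesis
    proof
      assume "f \<in> Cb" then show ?thesis by (simp add: cp_def cp_Cb_def)
    next
      assume "lsc f \<and> (\<forall>x. 0 \<le> f x)" then show ?thesis using A by simp
    qed
  next
    case False
    have n1: "f \<notin> Cb" "\<not> (lsc f \<and> (\<forall>x. 0 \<le> f x))" using False by auto
    have cpf: "cp p \<P> f = (INF h\<in>{h. lsc h \<and> (\<forall>x. 0 \<le> h x) \<and> (\<forall>x. \<bar>f x\<bar> \<le> h x)}. cp_lsc p \<P> h)"
      unfolding cp_def by (simp only: if_not_P[OF n1(1)] if_not_P[OF n1(2)])
    show ?thesis unfolding cpf
    proof (rule INF_greatest)
      fix h assume h: "h \<in> {h. lsc h \<and> (\<forall>x. 0 \<le> h x) \<and> (\<forall>x. \<bar>f x\<bar> \<le> h x)}"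
      have "(SUP Q\<in>\<P>. Lp_val p Q f) \<le> (SUP Q\<in>\<P>. Lp_val p Q h)"
        by (rule SUP_mono'[rule_format], rule Lp_val_mono[OF p]) (use h in auto)
      also have "\<dots> = cp_lsc p \<P> h" using cp_lsc_eq[OF P p] h by simp
      finally show "(SUP Q\<in>\<P>. Lp_val p Q f) \<le> cp_lsc p \<P> h" .
    qed
  qed
  show ?thesis using A B by blast
qed

end
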